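(* Let $S$ be a finite, additively commutative, congruence-simple semiring. If the multiplication table of $S$ has two identical rows (i.e. there exist $r_1\ne r_2$ in $S$ with $r_1z=r_2z$ for all $z\in S$), or two identical columns (i.e. there exist $r_1\ne r_2$ with $zr_1=zr_2$ for all $z\in S$), then one of the following holds: (1) there exists $c\in S$ such that $xy=c$ for all $x,y\in S$; (2) $|S|=2$.
   Context: A semiring is a nonempty set $S$ with two associative binary operations $+$ and $\cdot$ satisfying both distributive laws $a(b+c)=ab+ac$ and $(a+b)c=ac+bc$; no identity elements are assumed. It is additively commutative if $(S,+)$ is commutative. A congruence relation on $S$ is an equivalence relation $\sim$ such that $x_1\sim x_2$ implies $c+x_1\sim c+x_2$, $x_1+c\sim x_2+c$, $cx_1\sim cx_2$, $x_1c\sim x_2c$ for all $c\in S$. $S$ is congruence-simple if its only congruence relations are the identity relation and $S\times S$. *)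

theory Defs
  imports Main
begin

definition semiring_on :: "'a set \<Rightarrow> ('a \<Rightarrow> 'a \<Rightarrow> 'a) \<Rightarrow> ('a \<Rightarrow> 'a \<Rightarrow> 'a) \<Rightarrow> bool" where
  "semiring_on S add mul \<longleftrightarrow> S \<noteq> {} \<and>
     (\<forall>a\<in>S. \<forall>b\<in>S. add a b \<in> S \<and> mul a b \<in> S) \<and>
     (\<forall>a\<in>S. \<forall>b\<in>S. \<forall>c\<in>S. add (add a b) c = add a (add b c)) \<and>
     (\<forall>a\<in>S. \<forall>b\<in>S. \<forall>c\<in>S. mul (mul a b) c = mul a (mul b c)) \<and>
     (\<forall>a\<in>S. \<forall>b\<in>S. \<forall>c\<in>S. mul a (add b c) = add (mul a b) (mul a c)) \<and>
     (\<forall>a\<in>S. \<forall>b\<in>S. \<forall>c\<in>S. mul (add a b) c = add (mul a c) (mul b c))"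

definition add_comm_on :: "'a set \<Rightarrow> ('a \<Rightarrow> 'a \<Rightarrow> 'a) \<Rightarrow> bool" where
  "add_comm_on S add \<longleftrightarrow> (\<forall>a\<in>S. \<forall>b\<in>S. add a b = add b a)"

definition semiring_congruence :: "'a set \<Rightarrow> ('a \<Rightarrow> 'a \<Rightarrow> 'a) \<Rightarrow> ('a \<Rightarrow> 'a \<Rightarrow> 'a) \<Rightarrow> 'a rel \<Rightarrow> bool" where
  "semiring_congruence S add mul R \<longleftrightarrow> equiv S R \<and>
     (\<forall>x1 x2 c. (x1, x2) \<in> R \<and> c \<in> S \<longrightarrow>
        (add c x1, add c x2) \<in> R \<and> (add x1 c, add x2 c) \<in> R \<and>
        (mul c x1, mul c x2) \<in> R \<and> (mul x1 c, mul x2 c) \<in> R)"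

definition congruence_simple :: "'a set \<Rightarrow> ('a \<Rightarrow> 'a \<Rightarrow> 'a) \<Rightarrow> ('a \<Rightarrow> 'a \<Rightarrow> 'a) \<Rightarrow> bool" where
  "congruence_simple S add mul \<longleftrightarrow>
     (\<forall>R. semiring_congruence S add mul R \<longrightarrow> R = Id_on S \<or> R = S \<times> S)"

end

theory Submission
  imports Defs
begin

lemma semilattice_small:
  assumes cl: "\<And>a b. a\<in>S \<Longrightarrow> b\<in>S \<Longrightarrow> add a b \<in> S"
    and as: "\<And>a b c. a\<in>S \<Longrightarrow> b\<in>S \<Longrightarrow> c\<in>S \<Longrightarrow> add (add a b) c = add a (add b c)"
    and cm: "\<And>a b. a\<in>S \<Longrightarrow> b\<in>S \<Longrightarrow> add a b = add b a"
    and idm: "\<And>a. a\<in>S \<Longrightarrow> add a a = a"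
    and mid: "\<And>a b. a\<in>S \<Longrightarrow> b\<in>S \<Longrightarrow> mul a b = b"
    and cs: "congruence_simple S add mul"
    and x: "x\<in>S" and y: "y\<in>S" and z: "z\<in>S" and d: "x\<noteq>y" "x\<noteq>z" "y\<noteq>z"
  shows False
proof -
  have key: "add (add c u) a = a \<longleftrightarrow> add c a = a \<and> add u a = a"
    if "c\<in>S" "u\<in>S" "a\<in>S" for c u a
  proof
    assume h: "add (add c u) a = a"
    have "add c a = add c (add (add c u) a)" using h by simp
    also have "\<dots> = add (add c c) (add u a)" using that cl as by metis
    also have "\<dots> = a" using that cl as idm h by metis
    finally have 1: "add c a = a" .
    have "add u a = add u (add (add u c) a)" using h cm that by metis
    also have "\<dots> = add (add u u) (add c a)" using that cl as by metis
    also have "\<dots> = a" using that cl as idm h cm by metis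
    finally show "add c a = a \<and> add u a = a" using 1 by simp
  next
    assume "add c a = a \<and> add u a = a"
    then show "add (add c u) a = a" using that as by metis
  qed
  have top: "\<forall>w\<in>S. add w a = a" if a: "a\<in>S" and two: "\<And>v. v\<in>S \<Longrightarrow> v \<noteq> a \<Longrightarrow> \<exists>v'\<in>S. v' \<noteq> a \<and> v' \<noteq> v"
    for a
  proof -
    define R where "R = {(u,v). u\<in>S \<and> v\<in>S \<and> (add u a = a \<longleftrightarrow> add v a = a)}"
    have "semiring_congruence S add mul R"
      unfolding semiring_congruence_def
    proof (intro conjI allI impI)
      show "equiv S R" unfolding R_def equiv_def refl_on_def sym_def trans_def by auto
    next
      fix x1 x2 c assume h: "(x1, x2) \<in> R \<and> c \<in> S"
      then have m: "x1\<in>S" "x2\<in>S" "c\<in>S" unfolding R_def by auto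
      show "(add c x1, add c x2) \<in> R" using h m key[OF _ _ a] cl unfolding R_def by auto
      show "(add x1 c, add x2 c) \<in> R" using h m key[OF _ _ a] cl cm unfolding R_def by auto
      show "(mul c x1, mul c x2) \<in> R" using h m mid by simp
      show "(mul x1 c, mul x2 c) \<in> R" using h m mid unfolding R_def by auto
    qed
    with cs have "R = Id_on S \<or> R = S \<times> S" unfolding congruence_simple_def by blast
    then show ?thesis
    proof
      assume Rid: "R = Id_on S"
      have False
      proof (cases "S = {a}")
        case True then show ?thesis using x y d by auto
      next
        case False
        then obtain v where v: "v\<in>S" "v\<noteq>a" using a by auto
        then obtain v' where v': "v'\<in>S" "v'\<noteq>a" "v'\<noteq>v" using two by blast
        have na: "add w a \<noteq> a" if "w\<in>S" "w\<noteq>a" for w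
        proof
          assume "add w a = a"
          then have "(w,a)\<in>R" unfolding R_def using that a idm by auto
          then show False using Rid that by auto
        qed
        have "(v,v')\<in>R" unfolding R_def using na v v' by auto
        then show False using Rid v' by auto
      qed
      then show ?thesis ..
    next
      assume "R = S \<times> S"
      then show ?thesis using a idm unfolding R_def by auto
    qed
  qed
  have tw: "\<exists>v'\<in>S. v' \<noteq> a \<and> v' \<noteq> v" if "a \<in> {x,y,z}" "v\<noteq>a" for a v
    using that x y z d by (cases "v = x"; cases "v = y") auto
  have "add y x = x" using top[OF x tw] x y by auto
  moreover have "add x y = y" using top[OF y tw] x y by auto
  ultimately show False using cm[OF x y] d by simp
qed


lemma row_case:
  assumes sr: "semiring_on S add mul" and ac: "add_comm_on S add"
    and cs: "congruence_simple S add mul"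
    and r: "r1\<in>S" "r2\<in>S" "r1\<noteq>r2" "\<forall>z\<in>S. mul r1 z = mul r2 z"
  shows "(\<exists>c\<in>S. \<forall>x\<in>S. \<forall>y\<in>S. mul x y = c) \<or> card S = 2"
proof -
  have cl: "\<And>a b. a\<in>S \<Longrightarrow> b\<in>S \<Longrightarrow> add a b \<in> S" "\<And>a b. a\<in>S \<Longrightarrow> b\<in>S \<Longrightarrow> mul a b \<in> S"
    and asA: "\<And>a b c. a\<in>S \<Longrightarrow> b\<in>S \<Longrightarrow> c\<in>S \<Longrightarrow> add (add a b) c = add a (add b c)"
    and asM: "\<And>a b c. a\<in>S \<Longrightarrow> b\<in>S \<Longrightarrow> c\<in>S \<Longrightarrow> mul (mul a b) c = mul a (mul b c)"
    and dl: "\<And>a b c. a\<in>S \<Longrightarrow> b\<in>S \<Longrightarrow> c\<in>S \<Longrightarrow> mul a (add b c) = add (mul a b) (mul a c)"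
    and dr: "\<And>a b c. a\<in>S \<Longrightarrow> b\<in>S \<Longrightarrow> c\<in>S \<Longrightarrow> mul (add a b) c = add (mul a c) (mul b c)"
    using sr unfolding semiring_on_def by auto
  have cm: "\<And>a b. a\<in>S \<Longrightarrow> b\<in>S \<Longrightarrow> add a b = add b a" using ac unfolding add_comm_on_def by auto
  define R where "R = {(x,y). x\<in>S \<and> y\<in>S \<and> (\<forall>z\<in>S. mul x z = mul y z)}"
  have "semiring_congruence S add mul R"
    unfolding semiring_congruence_def
  proof (intro conjI allI impI)
    show "equiv S R" unfolding R_def equiv_def refl_on_def sym_def trans_def by auto
  next
    fix x1 x2 c assume h: "(x1, x2) \<in> R \<and> c \<in> S"
    then have m: "x1\<in>S" "x2\<in>S" "c\<in>S" and e: "\<forall>z\<in>S. mul x1 z = mul x2 z" unfolding R_def by auto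
    show "(add c x1, add c x2) \<in> R" using m e cl dr unfolding R_def by auto
    show "(add x1 c, add x2 c) \<in> R" using m e cl dr unfolding R_def by auto
    show "(mul c x1, mul c x2) \<in> R" using m e cl asM unfolding R_def by auto
    show "(mul x1 c, mul x2 c) \<in> R" using m e cl asM unfolding R_def by auto
  qed
  with cs have "R = Id_on S \<or> R = S \<times> S" unfolding congruence_simple_def by blast
  moreover have "(r1,r2) \<in> R" using r unfolding R_def by auto
  ultimately have "R = S \<times> S" using r by auto
  then have row: "\<And>x y z. x\<in>S \<Longrightarrow> y\<in>S \<Longrightarrow> z\<in>S \<Longrightarrow> mul x z = mul y z"
    unfolding R_def by auto
  define f where "f z = mul r1 z" for z
  have mf: "\<And>x z. x\<in>S \<Longrightarrow> z\<in>S \<Longrightarrow> mul x z = f z" using row r unfolding f_def by blast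
  have fS: "\<And>z. z\<in>S \<Longrightarrow> f z \<in> S" using cl r unfolding f_def by auto
  have ff: "\<And>z. z\<in>S \<Longrightarrow> f (f z) = f z"
    using asM[OF r(1) r(1)] mf cl r unfolding f_def by metis
  have fadd: "\<And>y z. y\<in>S \<Longrightarrow> z\<in>S \<Longrightarrow> f (add y z) = add (f y) (f z)"
    using dl r unfolding f_def by auto
  define K where "K = {(x,y). x\<in>S \<and> y\<in>S \<and> f x = f y}"
  have "semiring_congruence S add mul K"
    unfolding semiring_congruence_def
  proof (intro conjI allI impI)
    show "equiv S K" unfolding K_def equiv_def refl_on_def sym_def trans_def by auto
  next
    fix x1 x2 c assume h: "(x1, x2) \<in> K \<and> c \<in> S"
    then have m: "x1\<in>S" "x2\<in>S" "c\<in>S" and e: "f x1 = f x2" unfolding K_def by auto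
    show "(add c x1, add c x2) \<in> K" using m e cl fadd unfolding K_def by auto
    show "(add x1 c, add x2 c) \<in> K" using m e cl fadd unfolding K_def by auto
    show "(mul c x1, mul c x2) \<in> K" using m e cl mf ff unfolding K_def by auto
    show "(mul x1 c, mul x2 c) \<in> K" using m e cl mf unfolding K_def by auto
  qed
  with cs have "K = Id_on S \<or> K = S \<times> S" unfolding congruence_simple_def by blast
  then show ?thesis
  proof
    assume "K = S \<times> S"
    then have "\<forall>x\<in>S. \<forall>y\<in>S. mul x y = f r1" using mf r unfolding K_def by auto
    then show ?thesis using fS r by blast
  next
    assume KI: "K = Id_on S"
    have fid: "\<And>z. z\<in>S \<Longrightarrow> f z = z"
    proof -
      fix z assume z: "z\<in>S"
      then have "(f z, z) \<in> K" unfolding K_def using fS ff by auto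
      then show "f z = z" using KI by auto
    qed
    have mid: "\<And>a b. a\<in>S \<Longrightarrow> b\<in>S \<Longrightarrow> mul a b = b" using mf fid by auto
    have idm: "\<And>a. a\<in>S \<Longrightarrow> add a a = a"
      using dr[OF r(1) r(1)] mid cl r by metis
    have three: "w = r1 \<or> w = r2" if "w\<in>S" for w
      using semilattice_small[OF cl(1) asA cm idm mid cs that r(1) r(2)] r(3) by auto
    then have "S = {r1, r2}" using r by auto
    then show ?thesis using r by auto
  qed
qed

lemma opp:
  assumes sr: "semiring_on S add mul" and ac: "add_comm_on S add"
    and cs: "congruence_simple S add mul"
  shows "semiring_on S add (\<lambda>a b. mul b a)" "congruence_simple S add (\<lambda>a b. mul b a)"
proof -
  show "semiring_on S add (\<lambda>a b. mul b a)" using sr unfolding semiring_on_def by auto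
  have "semiring_congruence S add mul R" if "semiring_congruence S add (\<lambda>a b. mul b a) R" for R
    using that unfolding semiring_congruence_def by blast
  then show "congruence_simple S add (\<lambda>a b. mul b a)" using cs unfolding congruence_simple_def by blast
qed

theorem lemma2p1:
  fixes S :: "'a set" and add mul :: "'a \<Rightarrow> 'a \<Rightarrow> 'a"
  assumes "semiring_on S add mul"
    and "finite S"
    and "add_comm_on S add"
    and "congruence_simple S add mul"
    and "(\<exists>r1\<in>S. \<exists>r2\<in>S. r1 \<noteq> r2 \<and> (\<forall>z\<in>S. mul r1 z = mul r2 z))
       \<or> (\<exists>r1\<in>S. \<exists>r2\<in>S. r1 \<noteq> r2 \<and> (\<forall>z\<in>S. mul z r1 = mul z r2))"
  shows "(\<exists>c\<in>S. \<forall>x\<in>S. \<forall>y\<in>S. mul x y = c) \<or> card S = 2"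
  using assms(5)
proof
  assume "\<exists>r1\<in>S. \<exists>r2\<in>S. r1 \<noteq> r2 \<and> (\<forall>z\<in>S. mul r1 z = mul r2 z)"
  then show ?thesis using row_case[OF assms(1,3,4)] by blast
next
  assume "\<exists>r1\<in>S. \<exists>r2\<in>S. r1 \<noteq> r2 \<and> (\<forall>z\<in>S. mul z r1 = mul z r2)"
  then obtain r1 r2 where "r1\<in>S" "r2\<in>S" "r1\<noteq>r2" "\<forall>z\<in>S. mul z r1 = mul z r2" by blast
  from row_case[OF opp(1)[OF assms(1,3,4)] assms(3) opp(2)[OF assms(1,3,4)] this]
  show ?thesis by blast
qed

end
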